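(* Let $\mathbf{E}$ be the category whose objects are algebras and whose morphisms $A\to A'$ are the algebra epimorphisms (surjective unital algebra homomorphisms) $k:A\to A'$, with ordinary composition. Let $\mathbf{P}$ be the category whose objects are, for some $n\ge1$, nonzero finite-dimensional real vector spaces $P$ of real symmetric $n\times n$ matrices, and in which a morphism from $P$ ($n\times n$ matrices) to $P'$ ($n'\times n'$ matrices) is given by a real $n\times n'$ matrix $w$ with $ww^T$ nonsingular and $w^TPw\subseteq P'$; this morphism is denoted $w^T[\cdot]w$ and acts by $L\mapsto w^TLw$, and composition is composition of these maps (the composite of $w^T[\cdot]w:P\to P'$ followed by $w'^T[\cdot]w':P'\to P''$ is $(ww')^T[\cdot](ww')$). Define $F$ on objects by $F[A]=\mathfrak{u}_A$ and, for an epimorphism $k:A_1\to A_2$ (identified with its matrix), $F(k)=k^T[\cdot]k:\mathfrak{u}_{A_2}\to\mathfrak{u}_{A_1}$. Then for every epimorphism $k$ one has $k^T\mathfrak{u}_{A_2}k\subseteq\mathfrak{u}_{A_1}$ and $kk^T$ nonsingular, so $F(k)$ is a morphism of $\mathbf{P}$, and $F:\mathbf{E}\to\mathbf{P}$ is a contravariant functor.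
   Context: An "algebra" is a real finite-dimensional unital associative algebra with underlying vector space $\mathbb{R}^n$, standard basis, elements column vectors $s=(x_1,\dots,x_n)^T$ and $\mathbf{d}s=(dx_1,\dots,dx_n)^T$. An uncurling metric of $A$ is a real symmetric $n\times n$ matrix $L$ with $d\big((s^{-1})^TL\,\mathbf{d}s\big)=0$ on an open ball centered at $\mathbf{1}_A$ consisting only of units; the anti-rotor $\mathfrak{u}_A$ is the vector space of uncurling metrics (it is nonzero for every algebra). *)

theory Defs
  imports "HOL-Analysis.Analysis"
begin

text \<open>An algebra: a real finite-dimensional unital associative algebra on the
coordinate space real^'n (standard basis), given by its multiplication and unit.\<close>
definition is_algebra :: "(real^'n \<Rightarrow> real^'n \<Rightarrow> real^'n) \<Rightarrow> real^'n \<Rightarrow> bool" where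
  "is_algebra m e \<longleftrightarrow>
     (\<forall>x. linear (m x)) \<and> (\<forall>y. linear (\<lambda>x. m x y)) \<and>
     (\<forall>x y z. m (m x y) z = m x (m y z)) \<and>
     (\<forall>x. m e x = x \<and> m x e = x)"

definition alg_unit :: "(real^'n \<Rightarrow> real^'n \<Rightarrow> real^'n) \<Rightarrow> real^'n \<Rightarrow> real^'n \<Rightarrow> bool" where
  "alg_unit m e s \<longleftrightarrow> (\<exists>t. m s t = e \<and> m t s = e)"

definition alg_inv :: "(real^'n \<Rightarrow> real^'n \<Rightarrow> real^'n) \<Rightarrow> real^'n \<Rightarrow> real^'n \<Rightarrow> real^'n" where
  "alg_inv m e s = (THE t. m s t = e \<and> m t s = e)"

text \<open>Uncurling metric: symmetric L such that the 1-form (s^-1)^T L ds, whose coefficient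
vector at s is the row vector (s^-1)^T L, is closed (its Jacobian is symmetric, i.e.
d of the form vanishes) on some open ball around the unit consisting only of units.\<close>
definition uncurling_metric :: "(real^'n \<Rightarrow> real^'n \<Rightarrow> real^'n) \<Rightarrow> real^'n \<Rightarrow> real^'n^'n \<Rightarrow> bool" where
  "uncurling_metric m e L \<longleftrightarrow>
     transpose L = L \<and>
     (\<exists>r>0. ball e r \<subseteq> {s. alg_unit m e s} \<and>
        (\<forall>s\<in>ball e r. \<exists>D. ((\<lambda>x. alg_inv m e x v* L) has_derivative D) (at s) \<and>
                            (\<forall>u v. D u \<bullet> v = D v \<bullet> u)))"

definition anti_rotor :: "(real^'n \<Rightarrow> real^'n \<Rightarrow> real^'n) \<Rightarrow> real^'n \<Rightarrow> (real^'n^'n) set" where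
  "anti_rotor m e = {L. uncurling_metric m e L}"

definition alg_epi :: "(real^'a \<Rightarrow> real^'a \<Rightarrow> real^'a) \<Rightarrow> real^'a \<Rightarrow>
    (real^'b \<Rightarrow> real^'b \<Rightarrow> real^'b) \<Rightarrow> real^'b \<Rightarrow> real^'a^'b \<Rightarrow> bool" where
  "alg_epi m1 e1 m2 e2 k \<longleftrightarrow>
     surj (\<lambda>x. k *v x) \<and> k *v e1 = e2 \<and> (\<forall>x y. k *v m1 x y = m2 (k *v x) (k *v y))"

end

theory Submission
  imports Defs
begin

lemma inv_unique:
  assumes A: "is_algebra m e" and h: "m s t = e" "m t s = e"
  shows "alg_inv m e s = t"
  unfolding alg_inv_def
proof (rule the_equality)
  show "m s t = e \<and> m t s = e" using h by simp
next
  fix t' assume "m s t' = e \<and> m t' s = e"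
  hence h': "m s t' = e" "m t' s = e" by auto
  have "t' = m t' (m s t)" using A h unfolding is_algebra_def by simp
  also have "\<dots> = m (m t' s) t" using A unfolding is_algebra_def by simp
  also have "\<dots> = t" using A h' unfolding is_algebra_def by simp
  finally show "t' = t" .
qed

lemma units_ball:
  fixes m :: "real^'n \<Rightarrow> real^'n \<Rightarrow> real^'n"
  assumes A: "is_algebra m e"
  shows "\<exists>r>0. ball e r \<subseteq> {s. alg_unit m e s}"
proof -
  have bl: "bilinear m" using A unfolding is_algebra_def bilinear_def by auto
  obtain B where B: "B > 0" "\<And>x y. norm (m x y) \<le> B * norm x * norm y"
    using bilinear_bounded_pos[OF bl] by blast
  have lin1: "\<And>x. linear (m x)" and lin2: "\<And>y. linear (\<lambda>x. m x y)"
    using A unfolding is_algebra_def by auto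
  have ee: "\<And>x. m e x = x" "\<And>x. m x e = x" using A unfolding is_algebra_def by auto
  have ass: "\<And>x y z. m (m x y) z = m x (m y z)" using A unfolding is_algebra_def by auto
  show ?thesis
  proof (intro exI conjI)
    show "1 / B > 0" using B by simp
    show "ball e (1 / B) \<subseteq> {s. alg_unit m e s}"
    proof
      fix s assume "s \<in> ball e (1/B)"
      hence ds: "norm (s - e) < 1 / B" by (simp add: dist_norm norm_minus_commute)
      have small: "norm (m (s - e) y) < norm y" if "y \<noteq> 0" for y
      proof -
        have "norm (m (s - e) y) \<le> B * norm (s - e) * norm y" using B by simp
        also have "\<dots> < B * (1/B) * norm y"
          using ds B that by (intro mult_strict_right_mono mult_strict_left_mono) auto
        also have "\<dots> = norm y" using B by simp
        finally show ?thesis .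
      qed
      have small2: "norm (m y (s - e)) < norm y" if "y \<noteq> 0" for y
      proof -
        have "norm (m y (s - e)) \<le> B * norm y * norm (s - e)" using B by simp
        also have "\<dots> = B * norm (s - e) * norm y" by simp
        also have "\<dots> < B * (1/B) * norm y"
          using ds B that by (intro mult_strict_right_mono mult_strict_left_mono) auto
        also have "\<dots> = norm y" using B by simp
        finally show ?thesis .
      qed
      have dec1: "m s y = y + m (s - e) y" for y
        using linear_add[OF lin2[of y], of e "s - e"] ee by simp
      have dec2: "m y s = y + m y (s - e)" for y
        using linear_add[OF lin1[of y], of e "s - e"] ee by simp
      have inj1: "inj (m s)"
      proof (rule linear_injective_0[THEN iffD2, OF lin1], intro allI impI)
        fix y assume "m s y = 0"
        hence "m (s - e) y = - y" using dec1[of y] by (simp add: add_eq_0_iff)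
        thus "y = 0" using small[of y] by (metis norm_minus_cancel order_less_irrefl)
      qed
      have inj2: "inj (\<lambda>y. m y s)"
      proof (rule linear_injective_0[THEN iffD2, OF lin2], intro allI impI)
        fix y assume "m y s = 0"
        hence "m y (s - e) = - y" using dec2[of y] by (simp add: add_eq_0_iff)
        thus "y = 0" using small2[of y] by (metis norm_minus_cancel order_less_irrefl)
      qed
      obtain t where t: "m s t = e" using linear_inj_imp_surj[OF lin1 inj1] by (metis surjD)
      obtain t' where t': "m t' s = e" using linear_inj_imp_surj[OF lin2 inj2] by (metis surjD)
      have "t' = t" using ass[of t' s t] t t' ee by simp
      thus "s \<in> {s. alg_unit m e s}" using t t' unfolding alg_unit_def by auto
    qed
  qed
qed

lemma transpose_add': "transpose (A + B) = transpose A + transpose (B::real^'n^'m)"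
  by (simp add: transpose_def vec_eq_iff)

lemma subspace_anti_rotor:
  fixes m :: "real^'n \<Rightarrow> real^'n \<Rightarrow> real^'n"
  assumes A: "is_algebra m e"
  shows "subspace (anti_rotor m e)"
  unfolding subspace_def
proof (intro conjI ballI allI)
  obtain r where r: "r > 0" "ball e r \<subseteq> {s. alg_unit m e s}" using units_ball[OF A] by blast
  show "0 \<in> anti_rotor m e"
    unfolding anti_rotor_def uncurling_metric_def mem_Collect_eq
  proof (intro conjI exI[of _ r] ballI)
    show "transpose (0::real^'n^'n) = 0" by (simp add: transpose_def vec_eq_iff)
    show "r > 0" "ball e r \<subseteq> {s. alg_unit m e s}" using r by auto
    fix s
    show "\<exists>D. ((\<lambda>x. alg_inv m e x v* (0::real^'n^'n)) has_derivative D) (at s) \<and> (\<forall>u v. D u \<bullet> v = D v \<bullet> u)"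
    proof (rule exI[of _ "\<lambda>_. 0"], rule conjI)
      have "(\<lambda>x. alg_inv m e x v* (0::real^'n^'n)) = (\<lambda>x. 0)"
        by (simp add: vector_matrix_mult_def vec_eq_iff fun_eq_iff)
      thus "((\<lambda>x. alg_inv m e x v* (0::real^'n^'n)) has_derivative (\<lambda>_. 0)) (at s)"
        by simp
    qed simp
  qed
next
  fix L1 L2 assume "L1 \<in> anti_rotor m e" "L2 \<in> anti_rotor m e"
  then obtain r1 r2 where L1: "transpose L1 = L1" "r1 > 0" "ball e r1 \<subseteq> {s. alg_unit m e s}"
     "\<forall>s\<in>ball e r1. \<exists>D. ((\<lambda>x. alg_inv m e x v* L1) has_derivative D) (at s) \<and> (\<forall>u v. D u \<bullet> v = D v \<bullet> u)"
    and L2: "transpose L2 = L2" "r2 > 0" "ball e r2 \<subseteq> {s. alg_unit m e s}"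
     "\<forall>s\<in>ball e r2. \<exists>D. ((\<lambda>x. alg_inv m e x v* L2) has_derivative D) (at s) \<and> (\<forall>u v. D u \<bullet> v = D v \<bullet> u)"
    unfolding anti_rotor_def uncurling_metric_def by blast
  show "L1 + L2 \<in> anti_rotor m e"
    unfolding anti_rotor_def uncurling_metric_def mem_Collect_eq
  proof (intro conjI exI[of _ "min r1 r2"] ballI)
    show "transpose (L1 + L2) = L1 + L2" using L1 L2 by (simp add: transpose_add')
    show "min r1 r2 > 0" using L1 L2 by simp
    show "ball e (min r1 r2) \<subseteq> {s. alg_unit m e s}" using L1 by auto
    fix s assume s: "s \<in> ball e (min r1 r2)"
    then obtain D1 D2 where D1: "((\<lambda>x. alg_inv m e x v* L1) has_derivative D1) (at s)" "\<forall>u v. D1 u \<bullet> v = D1 v \<bullet> u"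
      and D2: "((\<lambda>x. alg_inv m e x v* L2) has_derivative D2) (at s)" "\<forall>u v. D2 u \<bullet> v = D2 v \<bullet> u"
      using L1(4) L2(4) s by (metis Int_iff ball_min_Int)
    show "\<exists>D. ((\<lambda>x. alg_inv m e x v* (L1 + L2)) has_derivative D) (at s) \<and> (\<forall>u v. D u \<bullet> v = D v \<bullet> u)"
    proof (rule exI[of _ "\<lambda>u. D1 u + D2 u"], rule conjI)
      have "(\<lambda>x. alg_inv m e x v* (L1 + L2)) = (\<lambda>x. alg_inv m e x v* L1 + alg_inv m e x v* L2)"
        by (simp add: vector_matrix_mult_add_rdistrib)
      thus "((\<lambda>x. alg_inv m e x v* (L1 + L2)) has_derivative (\<lambda>u. D1 u + D2 u)) (at s)"
        using has_derivative_add[OF D1(1) D2(1)] by simp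
      show "\<forall>u v. (D1 u + D2 u) \<bullet> v = (D1 v + D2 v) \<bullet> u"
        using D1(2) D2(2) by (simp add: inner_add_left)
    qed

  qed
next
  fix c :: real and L assume "L \<in> anti_rotor m e"
  then obtain r where L: "transpose L = L" "r > 0" "ball e r \<subseteq> {s. alg_unit m e s}"
     "\<forall>s\<in>ball e r. \<exists>D. ((\<lambda>x. alg_inv m e x v* L) has_derivative D) (at s) \<and> (\<forall>u v. D u \<bullet> v = D v \<bullet> u)"
    unfolding anti_rotor_def uncurling_metric_def by blast
  show "c *\<^sub>R L \<in> anti_rotor m e"
    unfolding anti_rotor_def uncurling_metric_def mem_Collect_eq
  proof (intro conjI exI[of _ r] ballI)
    show "transpose (c *\<^sub>R L) = c *\<^sub>R L" using L by (simp add: transpose_scalar)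
    show "r > 0" "ball e r \<subseteq> {s. alg_unit m e s}" using L by auto
    fix s assume s: "s \<in> ball e r"
    then obtain D where D: "((\<lambda>x. alg_inv m e x v* L) has_derivative D) (at s)" "\<forall>u v. D u \<bullet> v = D v \<bullet> u"
      using L(4) s by blast
    show "\<exists>D. ((\<lambda>x. alg_inv m e x v* (c *\<^sub>R L)) has_derivative D) (at s) \<and> (\<forall>u v. D u \<bullet> v = D v \<bullet> u)"
    proof (rule exI[of _ "\<lambda>u. c *\<^sub>R D u"], rule conjI)
      have "(\<lambda>x. alg_inv m e x v* (c *\<^sub>R L)) = (\<lambda>x. c *\<^sub>R (alg_inv m e x v* L))"
        by (simp add: vector_scaleR_matrix_ac)
      thus "((\<lambda>x. alg_inv m e x v* (c *\<^sub>R L)) has_derivative (\<lambda>u. c *\<^sub>R D u)) (at s)"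
        using has_derivative_scaleR_right[OF D(1), of c] by simp
      show "\<forall>u v. (c *\<^sub>R D u) \<bullet> v = (c *\<^sub>R D v) \<bullet> u"
        using D(2) by simp
    qed

  qed
qed

lemma epi_inv:
  assumes A1: "is_algebra m1 e1" and A2: "is_algebra m2 e2"
    and epi: "alg_epi m1 e1 m2 e2 k" and u: "alg_unit m1 e1 x"
  shows "k *v alg_inv m1 e1 x = alg_inv m2 e2 (k *v x)"
proof -
  obtain t where t: "m1 x t = e1" "m1 t x = e1" using u unfolding alg_unit_def by blast
  have "alg_inv m1 e1 x = t" using inv_unique[OF A1 t] .
  moreover have "m2 (k *v x) (k *v t) = e2" "m2 (k *v t) (k *v x) = e2"
    using epi t unfolding alg_epi_def by metis+
  ultimately show ?thesis using inv_unique[OF A2] by metis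
qed

lemma pullback:
  fixes m1 :: "real^'n1 \<Rightarrow> real^'n1 \<Rightarrow> real^'n1" and e1 :: "real^'n1"
    and m2 :: "real^'n2 \<Rightarrow> real^'n2 \<Rightarrow> real^'n2" and e2 :: "real^'n2"
    and k :: "real^'n1^'n2"
  assumes A1: "is_algebra m1 e1" and A2: "is_algebra m2 e2"
    and epi: "alg_epi m1 e1 m2 e2 k" and L: "L \<in> anti_rotor m2 e2"
  shows "transpose k ** L ** k \<in> anti_rotor m1 e1"
proof -
  obtain r2 where L2: "transpose L = L" "r2 > 0" "ball e2 r2 \<subseteq> {s. alg_unit m2 e2 s}"
     "\<forall>s\<in>ball e2 r2. \<exists>D. ((\<lambda>x. alg_inv m2 e2 x v* L) has_derivative D) (at s) \<and> (\<forall>u v. D u \<bullet> v = D v \<bullet> u)"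
    using L unfolding anti_rotor_def uncurling_metric_def by auto
  obtain r1 where r1: "r1 > 0" "ball e1 r1 \<subseteq> {s. alg_unit m1 e1 s}" using units_ball[OF A1] by blast
  have ke: "k *v e1 = e2" using epi unfolding alg_epi_def by simp
  have "continuous (at e1) (\<lambda>x. k *v x)"
    by (simp add: linear_continuous_at)
  then obtain d where d: "d > 0" "\<And>x. dist x e1 < d \<Longrightarrow> dist (k *v x) e2 < r2"
    using L2(2) ke unfolding continuous_at_eps_delta by metis
  define r where "r = min r1 d"
  show ?thesis
    unfolding anti_rotor_def uncurling_metric_def mem_Collect_eq
  proof (intro conjI exI[of _ r] ballI)
    show "transpose (transpose k ** L ** k) = transpose k ** L ** k"
      using L2(1) by (simp add: matrix_transpose_mul matrix_mul_assoc)
    show "r > 0" using r1 d by (simp add: r_def)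
    show sub: "ball e1 r \<subseteq> {s. alg_unit m1 e1 s}" using r1 by (auto simp: r_def)
    fix s assume s: "s \<in> ball e1 r"
    have "k *v s \<in> ball e2 r2" using d(2)[of s] s by (auto simp: r_def dist_commute)
    then obtain D where D: "((\<lambda>x. alg_inv m2 e2 x v* L) has_derivative D) (at (k *v s))" "\<forall>u v. D u \<bullet> v = D v \<bullet> u"
      using L2(4) by force
    have kd: "((\<lambda>x. k *v x) has_derivative (\<lambda>x. k *v x)) (at s)"
      by (simp add: bounded_linear_imp_has_derivative)
    have c: "((\<lambda>x. alg_inv m2 e2 (k *v x) v* L) has_derivative (\<lambda>u. D (k *v u))) (at s)"
      using has_derivative_compose[OF kd D(1)] by (simp add: o_def)
    have bl: "bounded_linear (\<lambda>y::real^'n2. y v* k)"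
    proof -
      have "(\<lambda>y::real^'n2. y v* k) = (*v) (transpose k)" by (simp add: fun_eq_iff)
      thus ?thesis using matrix_vector_mul_bounded_linear[of "transpose k"] by metis
    qed
    have c2: "((\<lambda>x. (alg_inv m2 e2 (k *v x) v* L) v* k) has_derivative (\<lambda>u. D (k *v u) v* k)) (at s)"
      using bounded_linear.has_derivative[OF bl c] .
    have eq: "(alg_inv m2 e2 (k *v x) v* L) v* k = alg_inv m1 e1 x v* (transpose k ** L ** k)"
      if "x \<in> ball e1 r" for x
    proof -
      have "alg_unit m1 e1 x" using sub that by auto
      hence "alg_inv m2 e2 (k *v x) = k *v alg_inv m1 e1 x" using epi_inv[OF A1 A2 epi] by simp
      thus ?thesis by (simp add: vector_matrix_mul_assoc[symmetric])
    qed
    show "\<exists>D. ((\<lambda>x. alg_inv m1 e1 x v* (transpose k ** L ** k)) has_derivative D) (at s) \<and> (\<forall>u v. D u \<bullet> v = D v \<bullet> u)"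
    proof (intro exI conjI allI)
      show "((\<lambda>x. alg_inv m1 e1 x v* (transpose k ** L ** k)) has_derivative (\<lambda>u. D (k *v u) v* k)) (at s)"
        using has_derivative_transform_within_open[OF c2 open_ball s eq] by simp
      fix u v
      show "(D (k *v u) v* k) \<bullet> v = (D (k *v v) v* k) \<bullet> u"
        using D(2) by (simp add: dot_lmul_matrix)
    qed
  qed
qed


lemma kkT_invertible:
  fixes k :: "real^'n1^'n2"
  assumes su: "surj (\<lambda>x. k *v x)"
  shows "invertible (k ** transpose k)"
proof -
  have "inj ((*v) (k ** transpose k))"
  proof (rule linear_injective_0[THEN iffD2], simp, intro allI impI)
    fix x assume x0: "(k ** transpose k) *v x = 0"
    have "0 = x \<bullet> ((k ** transpose k) *v x)" using x0 by simp
    also have "\<dots> = x \<bullet> (k *v (x v* k))" by (simp add: matrix_vector_mul_assoc[symmetric])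
    also have "\<dots> = (x v* k) \<bullet> (x v* k)" by (simp add: dot_lmul_matrix)
    finally have xk: "x v* k = 0" by simp
    obtain y where y: "x = k *v y" using su by (metis surjD)
    have "x \<bullet> x = (x v* k) \<bullet> y" using y by (simp add: dot_lmul_matrix)
    thus "x = 0" using xk by simp
  qed
  thus ?thesis
    using invertible_left_inverse matrix_left_invertible_injective by blast
qed

theorem theorem6p1:
  fixes m1 :: "real^'n1 \<Rightarrow> real^'n1 \<Rightarrow> real^'n1" and e1 :: "real^'n1"
    and m2 :: "real^'n2 \<Rightarrow> real^'n2 \<Rightarrow> real^'n2" and e2 :: "real^'n2"
    and k :: "real^'n1^'n2"
  assumes A1: "is_algebra m1 e1" and A2: "is_algebra m2 e2"
    and epi: "alg_epi m1 e1 m2 e2 k"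
  shows "(\<forall>L\<in>anti_rotor m2 e2. transpose k ** L ** k \<in> anti_rotor m1 e1)
       \<and> invertible (k ** transpose k)
       \<and> subspace (anti_rotor m1 e1) \<and> subspace (anti_rotor m2 e2)
       \<and> alg_epi m1 e1 m1 e1 (mat 1 :: real^'n1^'n1)
       \<and> (\<forall>L \<in> anti_rotor m1 e1. transpose (mat 1 :: real^'n1^'n1) ** L ** mat 1 = L)
       \<and> (\<forall>(m3 :: real^'n3 \<Rightarrow> real^'n3 \<Rightarrow> real^'n3) e3 (k' :: real^'n2^'n3).
            is_algebra m3 e3 \<and> alg_epi m2 e2 m3 e3 k' \<longrightarrow>
              alg_epi m1 e1 m3 e3 (k' ** k) \<and>
              (\<forall>L \<in> anti_rotor m3 e3.
                 transpose (k' ** k) ** L ** (k' ** k)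
                 = transpose k ** (transpose k' ** L ** k') ** k))"
proof (intro conjI ballI allI impI)
  show "\<And>L. L \<in> anti_rotor m2 e2 \<Longrightarrow> transpose k ** L ** k \<in> anti_rotor m1 e1"
    using pullback[OF A1 A2 epi] .
  show "invertible (k ** transpose k)" using kkT_invertible epi unfolding alg_epi_def by blast
  show "subspace (anti_rotor m1 e1)" using subspace_anti_rotor[OF A1] .
  show "subspace (anti_rotor m2 e2)" using subspace_anti_rotor[OF A2] .
  show "alg_epi m1 e1 m1 e1 (mat 1 :: real^'n1^'n1)"
    unfolding alg_epi_def by simp
  show "\<And>L. transpose (mat 1 :: real^'n1^'n1) ** L ** mat 1 = L" by simp
next
  fix m3 :: "real^'n3 \<Rightarrow> real^'n3 \<Rightarrow> real^'n3" and e3 and k' :: "real^'n2^'n3"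
  assume h: "is_algebra m3 e3 \<and> alg_epi m2 e2 m3 e3 k'"
  have s1: "surj (\<lambda>x. k *v x)" and s2: "surj (\<lambda>x. k' *v x)"
    using epi h unfolding alg_epi_def by auto
  have "surj (\<lambda>x. (k' ** k) *v x)"
  proof -
    have "(\<lambda>x. (k' ** k) *v x) = (\<lambda>x. k' *v x) \<circ> (\<lambda>x. k *v x)"
      by (simp add: o_def matrix_vector_mul_assoc)
    thus ?thesis using comp_surj[OF s1 s2] by metis
  qed
  thus "alg_epi m1 e1 m3 e3 (k' ** k)"
    using epi h unfolding alg_epi_def by (simp add: matrix_vector_mul_assoc[symmetric])
  fix L
  show "transpose (k' ** k) ** L ** (k' ** k) = transpose k ** (transpose k' ** L ** k') ** k"
    by (simp add: matrix_transpose_mul matrix_mul_assoc)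
qed

end
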